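(* Let $1<a<2$, $B>0$, $P\ge 1$, $\delta>0$ and a positive integer $k$ with $(a/2)^{k-1}a \le 1-3\delta$. Let $(Z_n)$ be any real sequence and consider the system $X_{n+1} = aX_n + Z_n - U_n$ run under the following round-based rule starting at a time $m$ which is the start of a round, i.e. $C_m>0$ and $|X_m|\le C_m$: $U_m=0$; $C_{m+1}=aC_m+B$; $C_{m+i} = \frac a2 C_{m+i-1}+B$ for $i=2,\ldots,k$; $U_{m+i} = \frac a2 C_{m+i}\operatorname{sign}(X_{m+i})$ for $i=1,\ldots,k-1$; then $C_{m+k+j}=P^jC_{m+k}$ and $U_{m+k+j}=0$ for $j\ge 0$, up to $\tau \triangleq \inf\{j\ge0\colon |X_{m+k+j}|\le C_{m+k+j}\}$ (the round ends at time $m+k+\tau$). Then for every integer $j$ with $0\le j\le\tau$, $$\max\{|X_{m+1}|,\ldots,|X_{m+k+j}|,C_{m+k+j}\} \le P a^{k+j}\left(2C_m + \frac{aB}{(2-a)(a-1)} + \sum_{\ell=0}^{k+j-1}a^{-\ell-1}|Z_{m+\ell}|\right).$$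
   Context: $\operatorname{sign}(x)\in\{-1,0,1\}$ denotes the sign of $x$. The quantities $C_n$ are the bounds on the state magnitude maintained by a 1-bit quantizer-controller scheme: during the first $k$ steps of a round the quantizer sends signs of the state and at time $m+k+j$ it sends whether $|X_{m+k+j}|\le C_{m+k+j}$ (magnitude test). *)

theory Defs
  imports Complex_Main
begin

end

theory Submission
  imports Defs
begin

theorem lemma2:
  fixes a B P \<delta> :: real and k m j :: nat and X Z U C :: "nat \<Rightarrow> real"
  assumes a1: "1 < a" and a2: "a < 2" and hB: "B > 0" and hP: "P \<ge> 1" and h\<delta>: "\<delta> > 0"
    and hk: "k \<ge> 1"
    and hka: "(a / 2) ^ (k - 1) * a \<le> 1 - 3 * \<delta>"
    and sys: "\<And>n. X (Suc n) = a * X n + Z n - U n"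
    and Cm: "C m > 0" and Xm: "\<bar>X m\<bar> \<le> C m"
    and Um: "U m = 0"
    and C1: "C (m + 1) = a * C m + B"
    and Ci: "\<And>i. 2 \<le> i \<Longrightarrow> i \<le> k \<Longrightarrow> C (m + i) = a / 2 * C (m + i - 1) + B"
    and Ui: "\<And>i. 1 \<le> i \<Longrightarrow> i \<le> k - 1 \<Longrightarrow> U (m + i) = a / 2 * C (m + i) * sgn (X (m + i))"
    and Cj: "\<And>j'. j' \<le> j \<Longrightarrow> C (m + k + j') = P ^ j' * C (m + k)"
    and Uj: "\<And>j'. j' < j \<Longrightarrow> U (m + k + j') = 0"
    and jtau: "\<And>j'. j' < j \<Longrightarrow> \<not> (\<bar>X (m + k + j')\<bar> \<le> C (m + k + j'))"
  shows "(\<forall>i\<in>{1..k + j}. \<bar>X (m + i)\<bar> \<le>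
            P * a ^ (k + j) * (2 * C m + a * B / ((2 - a) * (a - 1))
              + (\<Sum>l<k + j. \<bar>Z (m + l)\<bar> / a ^ (l + 1))))
       \<and> C (m + k + j) \<le>
            P * a ^ (k + j) * (2 * C m + a * B / ((2 - a) * (a - 1))
              + (\<Sum>l<k + j. \<bar>Z (m + l)\<bar> / a ^ (l + 1)))"
proof -
  define K where "K = 2 * C m + a * B / ((2 - a) * (a - 1))"
  define S where "S = (\<lambda>i. \<Sum>l<i. \<bar>Z (m + l)\<bar> / a ^ (l + 1))"
  have apos: "a > 0" using a1 by simp
  have S0: "S i \<ge> 0" for i unfolding S_def using apos by (intro sum_nonneg divide_nonneg_pos) auto
  have Smono: "S i \<le> S i'" if "i \<le> i'" for i i'
    unfolding S_def using that apos by (intro sum_mono2 divide_nonneg_pos) auto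
  have SSuc: "a ^ Suc i * S (Suc i) = a * (a ^ i * S i) + \<bar>Z (m + i)\<bar>" for i
    unfolding S_def using apos by (simp add: field_simps)
  have q: "(2 - a) * (a - 1) > 0" using a1 a2 by simp
  have q4: "(2 - a) * (a - 1) \<le> 1/4"
  proof -
    have "(2 - a) * (a - 1) = 1/4 - (a - 3/2)^2" by (simp add: power2_eq_square algebra_simps)
    thus ?thesis by simp
  qed
  have BK: "a * B / ((2 - a) * (a - 1)) \<ge> 4 * a * B"
  proof -
    have "4 * a * B * ((2 - a) * (a - 1)) \<le> 4 * a * B * (1/4)"
      using q4 apos hB by (intro mult_left_mono) auto
    thus ?thesis using q by (simp add: field_simps)
  qed
  have K0: "K \<ge> 0" proof - have "4 * a * B > 0" using apos hB by simp thus ?thesis unfolding K_def using BK Cm by linarith qed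
  have CA: "C (m + i) \<le> a ^ i * K" if "1 \<le> i" "i \<le> k" for i
    using that
  proof (induction i)
    case 0 then show ?case by simp
  next
    case (Suc i)
    show ?case
    proof (cases "i = 0")
      case True
      have "a * (a * B / ((2 - a) * (a - 1))) \<ge> 1 * (4 * a * B)"
        using BK a1 apos hB by (intro mult_mono) auto
      moreover have "4 * a * B \<ge> B" using a1 hB by simp
      moreover have "a * C m \<ge> 0" using apos Cm by simp
      ultimately have "a * C m + B \<le> a * K" unfolding K_def
        by (simp add: distrib_left)
      then show ?thesis using True C1 by simp
    next
      case False
      have IH: "C (m + i) \<le> a ^ i * K" using Suc False by simp
      have e: "C (m + Suc i) = a / 2 * C (m + i) + B" using Ci[of "Suc i"] Suc False by simp
      have ai: "a ^ i \<ge> 1" using a1 by simp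
      have "B \<le> a ^ i * K / 2"
      proof -
        have "K \<ge> 4 * a * B" unfolding K_def using BK Cm by simp
        hence "a ^ i * K \<ge> 1 * (4 * a * B)" using ai K0 apos hB by (intro mult_mono) auto
        moreover have "4 * a * B \<ge> 2 * B" using a1 hB by simp ultimately show ?thesis by linarith
      qed
      hence "a / 2 * C (m + i) + B \<le> a / 2 * (a ^ i * K) + a ^ i * K / 2"
        using IH apos by (intro add_mono mult_left_mono) auto
      also have "\<dots> \<le> a ^ Suc i * K"
      proof -
        have "a ^ i * K \<ge> 0" using K0 apos by simp
        hence h: "1 * (a ^ i * K) \<le> a * (a ^ i * K)" using a1 by (intro mult_right_mono) auto
        have "a ^ Suc i * K = a * (a ^ i * K)" by simp
        thus ?thesis using h by (simp add: field_simps)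
      qed
      finally show ?thesis using e by simp
    qed
  qed
  have Cpos: "C (m + i) > 0" if "1 \<le> i" "i \<le> k" for i
    using that
  proof (induction i)
    case 0 then show ?case by simp
  next
    case (Suc i)
    show ?case
    proof (cases "i = 0")
      case True
      then show ?thesis using C1 mult_pos_pos[OF apos Cm] hB by simp
    next
      case False
      have "C (m + i) > 0" using Suc False by simp
      moreover have "C (m + Suc i) = a / 2 * C (m + i) + B" using Ci[of "Suc i"] Suc False by simp
      ultimately show ?thesis using apos hB by (simp add: add_pos_pos)
    qed
  qed
  have XB: "\<bar>X (m + i)\<bar> \<le> C (m + i) + a ^ i * S i" if "1 \<le> i" "i \<le> k" for i
    using that
  proof (induction i)
    case 0 then show ?case by simp
  next
    case (Suc i)
    show ?case
    proof (cases "i = 0")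
      case True
      have "X (m + 1) = a * X m + Z m" using sys[of m] Um by simp
      moreover have "\<bar>a * X m\<bar> = a * \<bar>X m\<bar>" using apos by (simp only: abs_mult abs_of_pos)
      moreover have "a * \<bar>X m\<bar> \<le> a * C m" using Xm apos by (intro mult_left_mono) auto
      ultimately have "\<bar>X (m + 1)\<bar> \<le> a * C m + \<bar>Z m\<bar>"
        using abs_triangle_ineq[of "a * X m" "Z m"] by linarith
      moreover have "a ^ 1 * S 1 = \<bar>Z m\<bar>" unfolding S_def using apos by simp
      ultimately show ?thesis using True C1 hB by simp
    next
      case False
      define E where "E = a ^ i * S i"
      have E0: "E \<ge> 0" unfolding E_def using S0 apos by simp
      have IH: "\<bar>X (m + i)\<bar> \<le> C (m + i) + E" using Suc False E_def by simp
      have Ce: "C (m + Suc i) = a / 2 * C (m + i) + B" using Ci[of "Suc i"] Suc False by simp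
      have Ue: "U (m + i) = a / 2 * C (m + i) * sgn (X (m + i))" using Ui[of i] Suc False by simp
      have Cp: "C (m + i) \<ge> 0" using Cpos[of i] Suc False by simp
      have Xe: "X (m + Suc i) = a * X (m + i) + Z (m + i) - U (m + i)" using sys[of "m+i"] by simp
      have core: "\<bar>a * X (m + i) - a / 2 * C (m + i) * sgn (X (m + i))\<bar> \<le> a / 2 * C (m + i) + a * E"
      proof -
        have "\<bar>X (m + i) - C (m + i) / 2 * sgn (X (m + i))\<bar> \<le> C (m + i) / 2 + E"
        proof -
          consider "X (m + i) > 0" | "X (m + i) < 0" | "X (m + i) = 0" by linarith
          then show ?thesis
          proof cases
            case 1
            hence "X (m + i) - C (m + i) / 2 * sgn (X (m + i)) = X (m + i) - C (m + i) / 2" by simp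
            thus ?thesis using IH Cp E0 1 by (simp only: abs_le_iff) linarith
          next
            case 2
            hence "X (m + i) - C (m + i) / 2 * sgn (X (m + i)) = X (m + i) + C (m + i) / 2" by simp
            thus ?thesis using IH Cp E0 2 by (simp only: abs_le_iff) linarith
          next
            case 3
            thus ?thesis using Cp E0 by simp
          qed
        qed
        hence "a * \<bar>X (m + i) - C (m + i) / 2 * sgn (X (m + i))\<bar> \<le> a * (C (m + i) / 2 + E)"
          using apos by (intro mult_left_mono) auto
        moreover have "a * \<bar>X (m + i) - C (m + i) / 2 * sgn (X (m + i))\<bar> =
            \<bar>a * X (m + i) - a / 2 * C (m + i) * sgn (X (m + i))\<bar>"
        proof -
          have "a * X (m + i) - a / 2 * C (m + i) * sgn (X (m + i)) = a * (X (m + i) - C (m + i) / 2 * sgn (X (m + i)))"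
            by (simp add: algebra_simps)
          thus ?thesis using apos by (simp only: abs_mult abs_of_pos)
        qed
        ultimately show ?thesis by (simp add: algebra_simps)
      qed
      have "X (m + Suc i) = (a * X (m + i) - a / 2 * C (m + i) * sgn (X (m + i))) + Z (m + i)"
        using Xe Ue by simp
      hence "\<bar>X (m + Suc i)\<bar> \<le> \<bar>a * X (m + i) - a / 2 * C (m + i) * sgn (X (m + i))\<bar> + \<bar>Z (m + i)\<bar>"
        by (metis abs_triangle_ineq)
      hence "\<bar>X (m + Suc i)\<bar> \<le> a / 2 * C (m + i) + a * E + \<bar>Z (m + i)\<bar>"
        using core by linarith
      moreover have "a ^ Suc i * S (Suc i) = a * E + \<bar>Z (m + i)\<bar>" using SSuc[of i] E_def by simp
      ultimately show ?thesis using Ce hB by linarith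
    qed
  qed
  have XA: "\<bar>X (m + i)\<bar> \<le> a ^ i * (K + S i)" if "1 \<le> i" "i \<le> k + j" for i
    using that
  proof (induction i)
    case 0 then show ?case by simp
  next
    case (Suc i)
    show ?case
    proof (cases "Suc i \<le> k")
      case True
      then show ?thesis using XB[of "Suc i"] CA[of "Suc i"] by (simp add: algebra_simps)
    next
      case False
      define j' where "j' = i - k"
      have j': "i = k + j'" "j' < j" using Suc False unfolding j'_def by auto
      have IH: "\<bar>X (m + i)\<bar> \<le> a ^ i * (K + S i)" using Suc hk j' by simp
      have Xe: "X (m + Suc i) = a * X (m + i) + Z (m + i)"
        using sys[of "m+i"] Uj[of j'] j' by (simp add: add.assoc)
      have "\<bar>X (m + Suc i)\<bar> \<le> a * \<bar>X (m + i)\<bar> + \<bar>Z (m + i)\<bar>"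
      proof -
        have "\<bar>a * X (m + i)\<bar> = a * \<bar>X (m + i)\<bar>" using apos by (simp only: abs_mult abs_of_pos)
        thus ?thesis using Xe abs_triangle_ineq[of "a * X (m + i)" "Z (m + i)"] by simp
      qed
      also have "\<dots> \<le> a * (a ^ i * (K + S i)) + \<bar>Z (m + i)\<bar>"
        using IH apos by simp
      also have "\<dots> = a ^ Suc i * (K + S (Suc i))"
        using SSuc[of i] by (simp add: algebra_simps)
      finally show ?thesis .
    qed
  qed
  define T where "T = a ^ (k + j) * (K + S (k + j))"
  have T0: "T \<ge> 0" unfolding T_def using K0 S0[of "k+j"] apos by simp
  have PT: "T \<le> P * T" using mult_right_mono[OF hP T0] by simp
  have Tb: "a ^ i * (K + S i) \<le> T" if "i \<le> k + j" for i
  proof -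
    have "a ^ i \<le> a ^ (k + j)" using that a1 by (intro power_increasing) auto
    moreover have "K + S i \<le> K + S (k + j)" using Smono[OF that] by simp
    moreover have "K + S i \<ge> 0" using K0 S0[of i] by simp
    ultimately show ?thesis unfolding T_def using apos by (intro mult_mono) auto
  qed
  have Xfin: "\<bar>X (m + i)\<bar> \<le> P * T" if "i \<in> {1..k + j}" for i
    using XA[of i] Tb[of i] PT that by auto
  have Cfin: "C (m + k + j) \<le> P * T"
  proof (cases j)
    case 0
    have "C (m + k) \<le> a ^ k * K" using CA[of k] hk by simp
    also have "\<dots> \<le> a ^ k * (K + S k)" using S0[of k] apos
      by (intro mult_left_mono) auto
    also have "\<dots> \<le> T" using Tb[of k] by simp
    finally show ?thesis using 0 PT by simp
  next
    case (Suc j0)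
    have "C (m + k + j) = P * C (m + k + j0)"
      using Cj[of j] Cj[of j0] Suc by simp
    also have "\<dots> \<le> P * \<bar>X (m + k + j0)\<bar>"
      using jtau[of j0] Suc hP by (intro mult_left_mono) auto
    also have "\<dots> \<le> P * (a ^ (k + j0) * (K + S (k + j0)))"
      using XA[of "k + j0"] hk Suc hP by (intro mult_left_mono) (auto simp: add.assoc)
    also have "\<dots> \<le> P * T"
      using Tb[of "k + j0"] Suc hP by (intro mult_left_mono) auto
    finally show ?thesis .
  qed
  have "P * T = P * a ^ (k + j) * (K + S (k + j))" unfolding T_def by (simp only: mult.assoc)
  hence "(\<forall>i\<in>{1..k + j}. \<bar>X (m + i)\<bar> \<le> P * a ^ (k + j) * (K + S (k + j)))
    \<and> C (m + k + j) \<le> P * a ^ (k + j) * (K + S (k + j))"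
    using Xfin Cfin by metis
  thus ?thesis unfolding K_def S_def by blast
qed

end
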